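(* Let $a,b>0$, $\chi_1,\chi_2\ge0$, $\lambda_1,\lambda_2,\mu_1,\mu_2>0$ with $b+\chi_2\mu_2>\chi_1\mu_1+M$. Let $0<\mu<\min\{1,\sqrt{\lambda_1/a},\sqrt{\lambda_2/a}\}$, $\tilde\mu\in(\mu,\min\{1,2\mu,\sqrt{\lambda_1/a},\sqrt{\lambda_2/a}\})$, $d>1$. Then for every $i,j\in\{1,2\}$, every $x\in\mathbb R$ and every $u\in\mathcal E_\mu$, $$|\partial_x(\chi_iV_i-\chi_jV_j)(x;u)|\le|\chi_i\mu_i-\chi_j\mu_j|\min\Big\{\frac{C_0}{\sqrt{\lambda_i}},\Big(\frac{1}{\sqrt{\lambda_i-a\mu^2}}+\frac{\mu\sqrt a}{\lambda_i-a\mu^2}\Big)\varphi_\mu(x)\Big\}$$ $$+\chi_j\mu_j\min\Big\{\frac{C_0|\sqrt{\lambda_i}-\sqrt{\lambda_j}|}{\sqrt{\lambda_i\lambda_j}},\Big(\Big|\frac{1}{\sqrt{\lambda_i-a\mu^2}}-\frac{1}{\sqrt{\lambda_j-a\mu^2}}\Big|+\frac{\mu\sqrt a|\lambda_i-\lambda_j|}{(\lambda_i-a\mu^2)(\lambda_j-a\mu^2)}\Big)\varphi_\mu(x)\Big\}.$$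
   Context: $(r)_+=\max\{r,0\}$. $M=\min\{\frac{(\chi_2\mu_2\lambda_2-\chi_1\mu_1\lambda_1)_++\chi_1\mu_1(\lambda_1-\lambda_2)_+}{\lambda_2},\frac{\chi_2\mu_2(\lambda_1-\lambda_2)_++(\chi_2\mu_2\lambda_2-\chi_1\mu_1\lambda_1)_+}{\lambda_1}\}$, $C_0=\frac{a}{b+\chi_2\mu_2-\chi_1\mu_1-M}$, $\varphi_\mu(x)=e^{-\sqrt a\mu x}$, $U^+_\mu=\min\{C_0,\varphi_\mu\}$, $U^-_\mu=\max\{0,\varphi_\mu-d\varphi_{\tilde\mu}\}$, $\mathcal E_\mu=\{u\in C^b_{\rm unif}(\mathbb R): U^-_\mu\le u\le U^+_\mu\}$ where $C^b_{\rm unif}(\mathbb R)$ is the space of bounded uniformly continuous functions. For $i=1,2$, $V_i(x;u)=\mu_i\int_0^\infty\int_{\mathbb R}\frac{e^{-\lambda_i s}}{\sqrt{4\pi s}}e^{-\frac{|x-z|^2}{4s}}u(z)\,dz\,ds$, the bounded solution of $V''-\lambda_iV+\mu_iu=0$. *)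

theory Defs
  imports "HOL-Analysis.Analysis"
begin

definition pos_part :: "real \<Rightarrow> real" where
  "pos_part r = max r 0"

text \<open>Parameters chi, lam, mu are indexed by i in {1,2} (functions nat => real).\<close>

definition Mconst :: "(nat \<Rightarrow> real) \<Rightarrow> (nat \<Rightarrow> real) \<Rightarrow> (nat \<Rightarrow> real) \<Rightarrow> real" where
  "Mconst chi lam mu = min
     ((pos_part (chi 2 * mu 2 * lam 2 - chi 1 * mu 1 * lam 1) + chi 1 * mu 1 * pos_part (lam 1 - lam 2)) / lam 2)
     ((chi 2 * mu 2 * pos_part (lam 1 - lam 2) + pos_part (chi 2 * mu 2 * lam 2 - chi 1 * mu 1 * lam 1)) / lam 1)"

definition C0 :: "real \<Rightarrow> real \<Rightarrow> (nat \<Rightarrow> real) \<Rightarrow> (nat \<Rightarrow> real) \<Rightarrow> (nat \<Rightarrow> real) \<Rightarrow> real" where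
  "C0 a b chi lam mu = a / (b + chi 2 * mu 2 - chi 1 * mu 1 - Mconst chi lam mu)"

definition phi :: "real \<Rightarrow> real \<Rightarrow> real \<Rightarrow> real" where
  "phi a m x = exp (- sqrt a * m * x)"

definition Uplus :: "real \<Rightarrow> real \<Rightarrow> (nat \<Rightarrow> real) \<Rightarrow> (nat \<Rightarrow> real) \<Rightarrow> (nat \<Rightarrow> real) \<Rightarrow> real \<Rightarrow> real \<Rightarrow> real" where
  "Uplus a b chi lam mu m x = min (C0 a b chi lam mu) (phi a m x)"

definition Uminus :: "real \<Rightarrow> real \<Rightarrow> real \<Rightarrow> real \<Rightarrow> real \<Rightarrow> real" where
  "Uminus a d m mt x = max 0 (phi a m x - d * phi a mt x)"

definition Cb_unif :: "(real \<Rightarrow> real) set" where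
  "Cb_unif = {u. bounded (range u) \<and> uniformly_continuous_on UNIV u}"

definition Eset :: "real \<Rightarrow> real \<Rightarrow> (nat \<Rightarrow> real) \<Rightarrow> (nat \<Rightarrow> real) \<Rightarrow> (nat \<Rightarrow> real) \<Rightarrow> real \<Rightarrow> real \<Rightarrow> real \<Rightarrow> (real \<Rightarrow> real) set" where
  "Eset a b chi lam mu d m mt =
     {u \<in> Cb_unif. \<forall>x. Uminus a d m mt x \<le> u x \<and> u x \<le> Uplus a b chi lam mu m x}"

definition Vfun :: "real \<Rightarrow> real \<Rightarrow> (real \<Rightarrow> real) \<Rightarrow> real \<Rightarrow> real" where
  "Vfun lm mi u x = mi * (LINT s:{0<..}|lborel.
      (LINT z|lborel. exp (- lm * s) / sqrt (4 * pi * s) * exp (- ((x - z)\<^sup>2) / (4 * s)) * u z))"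

end

theory Submission
  imports Defs "HOL-Probability.Probability" "HOL-Real_Asymp.Real_Asymp"
begin

lemma gauss_integrable: "integrable lborel (\<lambda>v::real. exp (- v\<^sup>2))"
  and gauss_integral: "(\<integral>v. exp (- v\<^sup>2) \<partial>lborel) = sqrt pi"
proof -
  have eq: "(\<lambda>v::real. exp (- v\<^sup>2)) = (\<lambda>v. sqrt pi * normal_density 0 (sqrt (1/2)) v)"
    by (auto simp: normal_density_def fun_eq_iff power_divide)
  show "integrable lborel (\<lambda>v::real. exp (- v\<^sup>2))" unfolding eq by simp
  show "(\<integral>v. exp (- v\<^sup>2) \<partial>lborel) = sqrt pi" unfolding eq by simp
qed

lemma expo_alg:
  fixes a b v H :: real
  assumes hk: "a * H\<^sup>2 = v * H + b" and H: "H \<noteq> 0"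
  shows "a\<^sup>2 * H\<^sup>2 + (4 * b\<^sup>2) / (4 * H\<^sup>2) = v\<^sup>2 + 2*a*b"
proof -
  have e1: "a\<^sup>2 * H\<^sup>2 * H\<^sup>2 = (v * H + b)\<^sup>2" using hk by (metis power2_eq_square power_mult_distrib mult.assoc mult.commute)
  have "(a\<^sup>2 * H\<^sup>2 + (4 * b\<^sup>2) / (4 * H\<^sup>2)) * H\<^sup>2 = a\<^sup>2 * H\<^sup>2 * H\<^sup>2 + b\<^sup>2"
    using H by (simp add: field_simps)
  also have "\<dots> = v\<^sup>2 * H\<^sup>2 + 2 * b * (v * H + b)" unfolding e1 by (simp add: power2_eq_square algebra_simps)
  also have "\<dots> = (v\<^sup>2 + 2*a*b) * H\<^sup>2" unfolding hk[symmetric] by (simp add: algebra_simps)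
  finally show ?thesis using H by simp
qed

lemma half_kernel:
  fixes a b :: real assumes a: "a > 0" and b: "b > 0"
  defines "D \<equiv> \<lambda>v. sqrt (v\<^sup>2 + 4*a*b)"
  defines "h \<equiv> \<lambda>v. (v + D v) / (2*a)"
  shows "integrable lborel (\<lambda>v. exp (- v\<^sup>2) * (h v / D v))"
    "(\<integral>v. exp (- v\<^sup>2) * (h v / D v) \<partial>lborel) = sqrt pi / (2*a)"
proof -
  have Dpos: "D v > 0" for v unfolding D_def using a b by (intro real_sqrt_gt_zero add_nonneg_pos) auto
  have Dge: "\<bar>v\<bar> \<le> D v" for v unfolding D_def
    by (metis abs_ge_zero le_add_same_cancel1 mult_nonneg_nonneg real_le_rsqrt real_sqrt_abs
          less_imp_le a b mult_pos_pos zero_less_numeral power2_abs)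
  have Dev: "D (-v) = D v" for v unfolding D_def by simp
  have hD: "0 \<le> h v / D v \<and> h v / D v \<le> 1 / a" for v
  proof -
    have "0 \<le> v + D v" "v + D v \<le> 2 * D v" using Dge[of v] by auto
    then show ?thesis using Dpos[of v] a unfolding h_def
      by (auto simp: divide_simps)
  qed
  have meas: "(\<lambda>v. exp (- v\<^sup>2) * (h v / D v)) \<in> borel_measurable lborel"
    unfolding h_def D_def by measurable
  show int: "integrable lborel (\<lambda>v. exp (- v\<^sup>2) * (h v / D v))"
  proof (rule Bochner_Integration.integrable_bound[OF integrable_mult_right[OF gauss_integrable, of "1/a"]])
    show "AE x in lborel. norm (exp (- x\<^sup>2) * (h x / D x)) \<le> norm (1 / a * exp (- x\<^sup>2))"
    proof (rule AE_I2)
      fix x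
      have h1: "0 \<le> h x / D x" "h x / D x \<le> 1 / a" using hD[of x] by auto
      have "norm (exp (- x\<^sup>2) * (h x / D x)) = exp (- x\<^sup>2) * (h x / D x)"
        unfolding real_norm_def by (rule abs_of_nonneg) (rule mult_nonneg_nonneg, simp, rule h1(1))
      also have "\<dots> \<le> exp (- x\<^sup>2) * (1 / a)" by (rule mult_left_mono[OF h1(2)]) simp
      also have "\<dots> = norm (1 / a * exp (- x\<^sup>2))" using a by simp
      finally show "norm (exp (- x\<^sup>2) * (h x / D x)) \<le> norm (1 / a * exp (- x\<^sup>2))" .
    qed
  qed (use meas in auto)
  have refl: "(\<integral>v. exp (- v\<^sup>2) * (h v / D v) \<partial>lborel) = (\<integral>v. exp (- v\<^sup>2) * (h (-v) / D (-v)) \<partial>lborel)"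
    using lborel_integral_real_affine[of "-1" "\<lambda>v. exp (- v\<^sup>2) * (h v / D v)" 0] by simp
  have int2: "integrable lborel (\<lambda>v. exp (- v\<^sup>2) * (h (-v) / D (-v)))"
    using lborel_integrable_real_affine[OF int, of "-1" 0] by simp
  have sum: "h v / D v + h (-v) / D (-v) = 1 / a" for v
    using Dpos[of v] a unfolding Dev h_def by (simp add: divide_simps)
  have "2 * (\<integral>v. exp (- v\<^sup>2) * (h v / D v) \<partial>lborel)
      = (\<integral>v. exp (- v\<^sup>2) * (h v / D v) + exp (- v\<^sup>2) * (h (-v) / D (-v)) \<partial>lborel)"
    using int int2 refl by simp
  also have "\<dots> = (\<integral>v. 1/a * exp (- v\<^sup>2) \<partial>lborel)"
  proof (rule Bochner_Integration.integral_cong)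
    fix x
    have "exp (- x\<^sup>2) * (h x / D x) + exp (- x\<^sup>2) * (h (-x) / D (-x)) = exp (- x\<^sup>2) * (h x / D x + h (-x) / D (-x))"
      by (rule distrib_left[symmetric])
    also have "\<dots> = 1/a * exp (- x\<^sup>2)" unfolding sum by simp
    finally show "exp (- x\<^sup>2) * (h x / D x) + exp (- x\<^sup>2) * (h (-x) / D (-x)) = 1/a * exp (- x\<^sup>2)" .
  qed simp
  also have "\<dots> = sqrt pi / a" using gauss_integral by simp
  finally show "(\<integral>v. exp (- v\<^sup>2) * (h v / D v) \<partial>lborel) = sqrt pi / (2*a)" by simp
qed

lemma kernel:
  fixes lam y :: real assumes lam: "lam > 0" and y: "y \<noteq> 0"
  defines "F \<equiv> \<lambda>s. exp (- lam * s) / sqrt (4 * pi * s) * exp (- (y\<^sup>2) / (4 * s))"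
  shows "set_integrable lborel {0<..} F"
    "(LINT s:{0<..}|lborel. F s) = exp (- sqrt lam * \<bar>y\<bar>) / (2 * sqrt lam)"
proof -
  define a where "a = sqrt lam"
  define b where "b = \<bar>y\<bar> / 2"
  have a: "a > 0" and b: "b > 0" using lam y by (auto simp: a_def b_def)
  define D where "D = (\<lambda>v. sqrt (v\<^sup>2 + 4*a*b))"
  define h where "h = (\<lambda>v. (v + D v) / (2*a))"
  define g where "g = (\<lambda>v. (h v)\<^sup>2)"
  define g' where "g' = (\<lambda>v. 2 * (h v)\<^sup>2 / D v)"
  have Dpos: "D v > 0" for v unfolding D_def using a b by (intro real_sqrt_gt_zero add_nonneg_pos) auto
  have Dsq: "(D v)\<^sup>2 = v\<^sup>2 + 4*a*b" for v unfolding D_def using a b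
    by (simp add: add_nonneg_nonneg)
  have Dgt: "\<bar>v\<bar> < D v" for v
  proof -
    have "\<bar>v\<bar> < D v" using Dsq[of v] Dpos[of v] a b
      by (metis abs_of_pos add_less_same_cancel1 mult_pos_pos power2_abs
          power_less_imp_less_base zero_less_numeral not_le abs_ge_zero order_le_less_trans
          add_pos_pos less_add_same_cancel1)
    then show ?thesis .
  qed
  have hpos: "h v > 0" for v unfolding h_def using Dgt[of v] a by (auto intro!: divide_pos_pos)
  have hkey: "a * (h v)\<^sup>2 = v * h v + b" for v
  proof -
    have "4 * a * (a * (h v)\<^sup>2) = (v + D v)\<^sup>2" unfolding h_def using a
      by (simp add: power_divide field_simps power2_eq_square)
    also have "\<dots> = v\<^sup>2 + 2 * v * D v + (D v)\<^sup>2" by (simp add: power2_eq_square algebra_simps)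
    also have "\<dots> = 4 * a * (v * h v + b)" unfolding Dsq h_def using a
      by (simp add: field_simps power2_eq_square)
    finally show ?thesis using a by simp
  qed
  have expo: "lam * (h v)\<^sup>2 + y\<^sup>2 / (4 * (h v)\<^sup>2) = v\<^sup>2 + 2*a*b" for v
  proof -
    have y2: "y\<^sup>2 = 4 * b\<^sup>2" unfolding b_def by (simp add: power_divide power2_abs)
    have l: "lam = a\<^sup>2" unfolding a_def using lam by simp
    have hp: "h v \<noteq> 0" using hpos[of v] by simp
    show ?thesis unfolding l y2 using expo_alg[OF hkey hp] by simp
  qed
  have Fg: "F (g v) * g' v = exp (-(2*a*b)) / sqrt pi * (exp (- v\<^sup>2) * (h v / D v))" for v
  proof -
    have s: "sqrt (4 * pi * (h v)\<^sup>2) = 2 * sqrt pi * h v"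
      using hpos[of v] by (simp add: real_sqrt_mult)
    have "F (g v) * g' v = exp (- lam * (h v)\<^sup>2) * exp (- (y\<^sup>2) / (4 * (h v)\<^sup>2)) * h v / (sqrt pi * D v)"
      unfolding F_def g_def g'_def s using hpos[of v] Dpos[of v]
      by (simp add: field_simps power2_eq_square)
    also have "exp (- lam * (h v)\<^sup>2) * exp (- (y\<^sup>2) / (4 * (h v)\<^sup>2)) = exp (-(2*a*b)) * exp (- v\<^sup>2)"
      using expo[of v] by (simp flip: exp_add)
    finally show ?thesis by simp
  qed
  have hk: "integrable lborel (\<lambda>v. exp (- v\<^sup>2) * (h v / D v))"
     "(\<integral>v. exp (- v\<^sup>2) * (h v / D v) \<partial>lborel) = sqrt pi / (2*a)"
    using half_kernel[OF a b] unfolding h_def D_def by auto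
  have Fnn: "0 \<le> F s" if "s > 0" for s unfolding F_def using that by simp
  have deriv: "DERIV g v :> g' v" for v
  proof -
    have "DERIV h v :> (1 + v / D v) / (2*a)" unfolding h_def D_def
      using Dpos[of v] a unfolding D_def
      by (auto intro!: derivative_eq_intros simp: power2_eq_square field_simps)
    then have "DERIV g v :> 2 * h v * ((1 + v / D v) / (2*a))" unfolding g_def
      by (auto intro!: derivative_eq_intros)
    moreover have "2 * h v * ((1 + v / D v) / (2*a)) = g' v"
      unfolding g'_def h_def using Dpos[of v] a by (simp add: field_simps power2_eq_square)
    ultimately show ?thesis by simp
  qed
  have limA: "((ereal \<circ> g \<circ> real_of_ereal) \<longlongrightarrow> ereal 0) (at_right (-\<infinity>))"
  proof -
    have "(g \<longlongrightarrow> 0) at_bot" unfolding g_def h_def D_def using a b by real_asymp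
    then show ?thesis by (simp add: ereal_tendsto_simps1 ereal_tendsto_simps2 comp_assoc)
  qed
  have limB: "((ereal \<circ> g \<circ> real_of_ereal) \<longlongrightarrow> \<infinity>) (at_left \<infinity>)"
  proof -
    have "filterlim g at_top at_top" unfolding g_def h_def D_def using a b by real_asymp
    then have "((ereal \<circ> g) \<longlongrightarrow> \<infinity>) at_top" using ereal_tendsto_simps2(2) by blast
    then show ?thesis by (subst ereal_tendsto_simps1(3))
  qed
  have intfg: "set_integrable lborel (einterval (-\<infinity>) \<infinity>) (\<lambda>v. F (g v) * g' v)"
    unfolding Fg set_integrable_def using integrable_mult_right[OF hk(1), of "exp (-(2*a*b)) / sqrt pi"] by simp
  have gpos: "g v > 0" for v unfolding g_def using hpos[of v] by simp
  have contF: "isCont F (g v)" for v unfolding F_def using gpos[of v]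
    by (intro continuous_intros) auto
  have contg': "isCont g' v" for v unfolding g'_def h_def D_def using Dpos[of v] a unfolding D_def
    by (intro continuous_intros) auto
  have g'nn: "0 \<le> g' v" for v unfolding g'_def using Dpos[of v] by simp
  note sub = interval_integral_substitution_nonneg[of "-\<infinity>" "\<infinity>" g g' F "ereal 0" "\<infinity>",
      OF _ deriv contF contg' Fnn[OF gpos] g'nn limA limB intfg]
  have ei: "einterval 0 \<infinity> = {0::real<..}" by (auto simp: einterval_iff)
  show "set_integrable lborel {0<..} F" using sub(1) by (simp add: ei)
  have "(LINT s:{0<..}|lborel. F s) = (LBINT s=ereal 0..\<infinity>. F s)"
    by (simp add: interval_integral_to_infinity_eq)
  also have "\<dots> = (LBINT v=-\<infinity>..\<infinity>. F (g v) * g' v)" using sub(2) by simp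
  also have "\<dots> = (\<integral>v. F (g v) * g' v \<partial>lborel)"
    by (simp add: interval_lebesgue_integral_def set_lebesgue_integral_def)
  also have "\<dots> = exp (-(2*a*b)) / sqrt pi * (sqrt pi / (2*a))"
    unfolding Fg by (subst integral_mult_right_zero) (simp only: hk(2))
  also have "\<dots> = exp (- sqrt lam * \<bar>y\<bar>) / (2 * sqrt lam)"
    unfolding a_def b_def by simp
  finally show "(LINT s:{0<..}|lborel. F s) = exp (- sqrt lam * \<bar>y\<bar>) / (2 * sqrt lam)" .
qed

lemma exp_Ioi:
  fixes r c :: real assumes r: "r > 0"
  shows "set_integrable lborel {c<..} (\<lambda>z. exp (- r * z))"
    "(LINT z:{c<..}|lborel. exp (- r * z)) = exp (- r * c) / r"
proof -
  let ?F = "\<lambda>z. - exp (- r * z) / r"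
  have d: "DERIV ?F z :> exp (- r * z)" for z using r
    by (auto intro!: derivative_eq_intros)
  have A: "((?F \<circ> real_of_ereal) \<longlongrightarrow> - exp (- r * c) / r) (at_right (ereal c))"
    unfolding ereal_tendsto_simps1 using r by (intro tendsto_intros continuous_on_imp_continuous_within) auto
  have B: "((?F \<circ> real_of_ereal) \<longlongrightarrow> 0) (at_left \<infinity>)"
    unfolding ereal_tendsto_simps1 using r by real_asymp
  note ftc = interval_integral_FTC_nonneg[of "ereal c" "\<infinity>" ?F "\<lambda>z. exp (- r * z)", OF _ d _ _ A B]
  have ei: "einterval (ereal c) \<infinity> = {c<..}" by (auto simp: einterval_iff)
  show "set_integrable lborel {c<..} (\<lambda>z. exp (- r * z))" using ftc(1) by (simp add: ei)
  show "(LINT z:{c<..}|lborel. exp (- r * z)) = exp (- r * c) / r"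
    using ftc(2) by (simp add: interval_integral_to_infinity_eq)
qed

lemma exp_Iio:
  fixes r c :: real assumes r: "r > 0"
  shows "set_integrable lborel {..<c} (\<lambda>z. exp (r * z))"
    "(LINT z:{..<c}|lborel. exp (r * z)) = exp (r * c) / r"
proof -
  let ?F = "\<lambda>z. exp (r * z) / r"
  have d: "DERIV ?F z :> exp (r * z)" for z using r
    by (auto intro!: derivative_eq_intros)
  have B: "((?F \<circ> real_of_ereal) \<longlongrightarrow> exp (r * c) / r) (at_left (ereal c))"
    unfolding ereal_tendsto_simps1 using r by (intro tendsto_intros continuous_on_imp_continuous_within) auto
  have A: "((?F \<circ> real_of_ereal) \<longlongrightarrow> 0) (at_right (-\<infinity>))"
    unfolding ereal_tendsto_simps1 using r by real_asymp
  note ftc = interval_integral_FTC_nonneg[of "-\<infinity>" "ereal c" ?F "\<lambda>z. exp (r * z)", OF _ d _ _ A B]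
  have ei: "einterval (-\<infinity>) (ereal c) = {..<c}" by (auto simp: einterval_iff)
  show "set_integrable lborel {..<c} (\<lambda>z. exp (r * z))" using ftc(1) by (simp add: ei)
  show "(LINT z:{..<c}|lborel. exp (r * z)) = exp (r * c) / r"
    using ftc(2) by (simp add: interval_lebesgue_integral_def ei)
qed

lemma heat_density:
  fixes s x :: real assumes s: "s > 0"
  shows "(\<lambda>z. 1 / sqrt (4 * pi * s) * exp (- ((x - z)\<^sup>2) / (4 * s))) = normal_density x (sqrt (2 * s))"
  using s by (auto simp: normal_density_def fun_eq_iff power2_commute[of x])

lemma Vfun_eq:
  fixes lm mi B x :: real and u :: "real \<Rightarrow> real"
  assumes lm: "lm > 0" and uc: "continuous_on UNIV u" and ub: "\<And>z. \<bar>u z\<bar> \<le> B"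
  shows "Vfun lm mi u x = mi / (2 * sqrt lm) * (\<integral>z. exp (- sqrt lm * \<bar>x - z\<bar>) * u z \<partial>lborel)"
proof -
  have um[measurable]: "u \<in> borel_measurable borel" using uc by (rule borel_measurable_continuous_onI)
  have B0: "0 \<le> B" using ub[of 0] by simp
  define G where "G = (\<lambda>s z. exp (- lm * s) / sqrt (4 * pi * s) * exp (- ((x - z)\<^sup>2) / (4 * s)) * u z)"
  define f where "f = (\<lambda>s z. indicator {0<..} s * G s z)"
  have fm[measurable]: "(\<lambda>(s, z). f s z) \<in> borel_measurable (lborel \<Otimes>\<^sub>M lborel)"
    unfolding f_def G_def by measurable
  have Gint: "integrable lborel (G s)" and Gnorm: "(\<integral>z. norm (G s z) \<partial>lborel) \<le> B * exp (- lm * s)"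
    if s: "s > 0" for s
  proof -
    have eq: "G s = (\<lambda>z. exp (- lm * s) * (normal_density x (sqrt (2 * s)) z * u z))"
      unfolding G_def heat_density[OF s, symmetric] by (auto simp: fun_eq_iff)
    have bnd: "norm (normal_density x (sqrt (2 * s)) z * u z) \<le> norm (normal_density x (sqrt (2 * s)) z * B)" for z
    proof -
      have uzB: "\<bar>u z\<bar> \<le> \<bar>B\<bar>" using ub[of z] by simp
      show ?thesis
        using mult_right_mono[OF uzB normal_density_nonneg[of x "sqrt (2 * s)" z]] by (simp add: abs_mult mult.commute)
    qed
    have ndi: "integrable lborel (\<lambda>z. normal_density x (sqrt (2 * s)) z * B)" using s by simp
    have i1: "integrable lborel (\<lambda>z. normal_density x (sqrt (2 * s)) z * u z)"
      by (rule Bochner_Integration.integrable_bound[OF ndi _ AE_I2[OF bnd]]) measurable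
    show "integrable lborel (G s)" unfolding eq using i1 by simp
    have "(\<integral>z. norm (G s z) \<partial>lborel) = exp (- lm * s) * (\<integral>z. normal_density x (sqrt (2 * s)) z * \<bar>u z\<bar> \<partial>lborel)"
      unfolding eq by (simp add: abs_mult)
    also have "\<dots> \<le> exp (- lm * s) * (\<integral>z. normal_density x (sqrt (2 * s)) z * B \<partial>lborel)"
    proof -
      have i2: "integrable lborel (\<lambda>z. normal_density x (sqrt (2 * s)) z * \<bar>u z\<bar>)"
        using integrable_abs[OF i1] by (simp add: abs_mult)
      show ?thesis using i2 ndi by (intro mult_left_mono integral_mono) (auto intro!: mult_left_mono ub)
    qed
    also have "\<dots> = B * exp (- lm * s)" using s by simp
    finally show "(\<integral>z. norm (G s z) \<partial>lborel) \<le> B * exp (- lm * s)" .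
  qed
  have fint: "integrable (lborel \<Otimes>\<^sub>M lborel) (\<lambda>(s, z). f s z)"
  proof (rule lborel_pair.Fubini_integrable)
    show "integrable lborel (\<lambda>s. \<integral>z. norm (case (s, z) of (s, z) \<Rightarrow> f s z) \<partial>lborel)"
    proof (rule Bochner_Integration.integrable_bound)
      show "integrable lborel (\<lambda>s. B * (indicator {0<..} s * exp (- lm * s)))"
        using exp_Ioi(1)[OF lm, of 0] unfolding set_integrable_def by simp
      show "AE s in lborel. norm (\<integral>z. norm (case (s, z) of (s, z) \<Rightarrow> f s z) \<partial>lborel)
             \<le> norm (B * (indicator {0<..} s * exp (- lm * s)))"
      proof (rule AE_I2)
        fix s :: real
        show "norm (\<integral>z. norm (case (s, z) of (s, z) \<Rightarrow> f s z) \<partial>lborel)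
             \<le> norm (B * (indicator {0<..} s * exp (- lm * s)))"
        proof (cases "s > 0")
          case True
          have "(\<integral>z. norm (case (s, z) of (s, z) \<Rightarrow> f s z) \<partial>lborel) = (\<integral>z. norm (G s z) \<partial>lborel)"
            unfolding f_def using True by simp
          moreover have "0 \<le> (\<integral>z. norm (G s z) \<partial>lborel)" by simp
          ultimately show ?thesis using Gnorm[OF True] True B0 by simp
        qed (simp add: f_def)
      qed
    qed (measurable)
    show "AE s in lborel. integrable lborel (\<lambda>z. case (s, z) of (s, z) \<Rightarrow> f s z)"
    proof (rule AE_I2)
      fix s :: real show "integrable lborel (\<lambda>z. case (s, z) of (s, z) \<Rightarrow> f s z)"
        using Gint[of s] by (cases "s > 0") (auto simp: f_def)
    qed
  qed (rule fm)
  have "Vfun lm mi u x = mi * (\<integral>s. (\<integral>z. f s z \<partial>lborel) \<partial>lborel)"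
    unfolding Vfun_def set_lebesgue_integral_def f_def G_def by simp
  also have "(\<integral>s. (\<integral>z. f s z \<partial>lborel) \<partial>lborel) = (\<integral>z. (\<integral>s. f s z \<partial>lborel) \<partial>lborel)"
    using lborel_pair.Fubini_integral[OF fint] by simp
  also have "\<dots> = (\<integral>z. exp (- sqrt lm * \<bar>x - z\<bar>) * u z / (2 * sqrt lm) \<partial>lborel)"
  proof (rule integral_cong_AE)
    show "AE z in lborel. (\<integral>s. f s z \<partial>lborel) = exp (- sqrt lm * \<bar>x - z\<bar>) * u z / (2 * sqrt lm)"
      using AE_lborel_singleton[of x]
    proof eventually_elim
      case (elim z)
      then have xz: "x - z \<noteq> 0" by simp
      note kk = kernel[OF lm xz]
      have "(\<integral>s. f s z \<partial>lborel) = (\<integral>s. indicator {0<..} s * (exp (- lm * s) / sqrt (4 * pi * s) * exp (- ((x - z)\<^sup>2) / (4 * s))) * u z \<partial>lborel)"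
        unfolding f_def G_def by (simp add: mult.assoc)
      also have "\<dots> = (LINT s:{0<..}|lborel. exp (- lm * s) / sqrt (4 * pi * s) * exp (- ((x - z)\<^sup>2) / (4 * s))) * u z"
        unfolding set_lebesgue_integral_def by (simp only: real_scaleR_def integral_mult_left_zero)
      also have "\<dots> = exp (- sqrt lm * \<bar>x - z\<bar>) * u z / (2 * sqrt lm)"
        unfolding kk(2) by simp
      finally show ?case .
    qed
  qed (measurable)
  also have "\<dots> = (\<integral>z. exp (- sqrt lm * \<bar>x - z\<bar>) * u z \<partial>lborel) / (2 * sqrt lm)"
    by simp
  finally show ?thesis by simp
qed


lemma sint_Iio:
  fixes r c B :: real and u :: "real \<Rightarrow> real"
  assumes r: "r > 0" and um: "u \<in> borel_measurable borel" and ub: "\<And>z. \<bar>u z\<bar> \<le> B"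
  shows "set_integrable lborel {..<c} (\<lambda>z. exp (r * z) * u z)"
proof (rule set_integrable_bound[OF set_integrable_mult_right[OF exp_Iio(1)[OF r, of c], of B]])
  show "set_borel_measurable lborel {..<c} (\<lambda>z. exp (r * z) * u z)"
    unfolding set_borel_measurable_def using um by measurable
  show "AE x in lborel. x \<in> {..<c} \<longrightarrow> norm (exp (r * x) * u x) \<le> norm (B * exp (r * x))"
    using ub by (intro AE_I2) (auto simp: abs_mult mult.commute intro: mult_right_mono order.trans[OF _ abs_ge_self])
qed

lemma sint_Ioi:
  fixes r c B :: real and u :: "real \<Rightarrow> real"
  assumes r: "r > 0" and um: "u \<in> borel_measurable borel" and ub: "\<And>z. \<bar>u z\<bar> \<le> B"
  shows "set_integrable lborel {c<..} (\<lambda>z. exp (- r * z) * u z)"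
proof (rule set_integrable_bound[OF set_integrable_mult_right[OF exp_Ioi(1)[OF r, of c], of B]])
  show "set_borel_measurable lborel {c<..} (\<lambda>z. exp (- r * z) * u z)"
    unfolding set_borel_measurable_def using um by measurable
  show "AE x in lborel. x \<in> {c<..} \<longrightarrow> norm (exp (- r * x) * u x) \<le> norm (B * exp (- r * x))"
    using ub by (intro AE_I2) (auto simp: abs_mult mult.commute intro: mult_right_mono order.trans[OF _ abs_ge_self])
qed

lemma E_split:
  fixes r B x :: real and u :: "real \<Rightarrow> real"
  assumes r: "r > 0" and um: "u \<in> borel_measurable borel" and ub: "\<And>z. \<bar>u z\<bar> \<le> B"
  shows "(\<integral>z. exp (- r * \<bar>x - z\<bar>) * u z \<partial>lborel)
     = exp (- r * x) * (LINT z:{..<x}|lborel. exp (r * z) * u z) + exp (r * x) * (LINT z:{x<..}|lborel. exp (- r * z) * u z)"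
proof -
  let ?f = "\<lambda>z. exp (- r * \<bar>x - z\<bar>) * u z"
  have e1: "(LINT z:{..<x}|lborel. ?f z) = exp (- r * x) * (LINT z:{..<x}|lborel. exp (r * z) * u z)"
  proof -
    have "(LINT z:{..<x}|lborel. ?f z) = (LINT z:{..<x}|lborel. exp (- r * x) * (exp (r * z) * u z))"
      by (rule set_lebesgue_integral_cong) (auto simp: mult_exp_exp algebra_simps)
    then show ?thesis by simp
  qed
  have e2: "(LINT z:{x<..}|lborel. ?f z) = exp (r * x) * (LINT z:{x<..}|lborel. exp (- r * z) * u z)"
  proof -
    have "(LINT z:{x<..}|lborel. ?f z) = (LINT z:{x<..}|lborel. exp (r * x) * (exp (- r * z) * u z))"
      by (rule set_lebesgue_integral_cong) (auto simp: mult_exp_exp algebra_simps)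
    then show ?thesis by simp
  qed
  have i1: "set_integrable lborel {..<x} ?f"
  proof -
    have "set_integrable lborel {..<x} (\<lambda>z. exp (- r * x) * (exp (r * z) * u z))"
      using sint_Iio[OF r um ub, of x] by simp
    moreover have "set_integrable lborel {..<x} ?f = set_integrable lborel {..<x} (\<lambda>z. exp (- r * x) * (exp (r * z) * u z))"
      by (rule set_integrable_cong) (auto simp: mult_exp_exp algebra_simps)
    ultimately show ?thesis by simp
  qed
  have i2: "set_integrable lborel {x<..} ?f"
  proof -
    have "set_integrable lborel {x<..} (\<lambda>z. exp (r * x) * (exp (- r * z) * u z))"
      using sint_Ioi[OF r um ub, of x] by simp
    moreover have "set_integrable lborel {x<..} ?f = set_integrable lborel {x<..} (\<lambda>z. exp (r * x) * (exp (- r * z) * u z))"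
      by (rule set_integrable_cong) (auto simp: mult_exp_exp algebra_simps)
    ultimately show ?thesis by simp
  qed
  have "(\<integral>z. ?f z \<partial>lborel) = (LINT z:{..<x} \<union> {x<..}|lborel. ?f z)"
  proof -
    have "(LINT z:{..<x} \<union> {x<..}|lborel. ?f z) = (LINT z:UNIV|lborel. ?f z)"
      by (rule set_integral_cong_set) (use um AE_lborel_singleton[of x] in \<open>auto simp: set_borel_measurable_def\<close>)
    then show ?thesis by (simp add: set_lebesgue_integral_def)
  qed
  also have "\<dots> = (LINT z:{..<x}|lborel. ?f z) + (LINT z:{x<..}|lborel. ?f z)"
    by (rule set_integral_Un_AE[OF _ _ _ i1 i2]) auto
  finally show ?thesis unfolding e1 e2 .
qed

lemma real_sub_helper: "(a::real) + b = c \<Longrightarrow> b = c - a" by simp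

lemma ftc_at:
  fixes g :: "real \<Rightarrow> real" and x :: real
  assumes gc: "continuous_on UNIV g"
  shows "((\<lambda>y. LBINT z=ereal 0..ereal y. g z) has_real_derivative g x) (at x)"
proof -
  have "((\<lambda>y. LBINT z=ereal 0..ereal y. g z) has_vector_derivative g x) (at x within {min 0 x - 1..max 0 x + 1})"
    by (rule interval_integral_FTC2) (auto intro: continuous_on_subset[OF gc])
  moreover have "at x within {min 0 x - 1..max 0 x + 1} = at x" by (rule at_within_Icc_at) auto
  ultimately show ?thesis by (simp add: has_real_derivative_iff_has_vector_derivative)
qed

lemma P_deriv:
  fixes r B x :: real and u :: "real \<Rightarrow> real"
  assumes r: "r > 0" and uc: "continuous_on UNIV u" and ub: "\<And>z. \<bar>u z\<bar> \<le> B"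
  shows "((\<lambda>y. LINT z:{..<y}|lborel. exp (r * z) * u z) has_real_derivative exp (r * x) * u x) (at x)"
proof -
  have um: "u \<in> borel_measurable borel" using uc by (rule borel_measurable_continuous_onI)
  let ?g = "\<lambda>z. exp (r * z) * u z"
  have eq: "(LINT z:{..<y}|lborel. ?g z) = (LINT z:{..<0}|lborel. ?g z) + (LBINT z=ereal 0..ereal y. ?g z)" for y
  proof -
    have ei: "einterval (-\<infinity>) (ereal c) = {..<c}" for c by (auto simp: einterval_iff)
    have mx: "max (ereal 0) (ereal y) = ereal (max 0 y)" by (cases "0 \<le> y") (auto simp: max_def)
    have int0: "interval_lebesgue_integrable lborel (-\<infinity>) (ereal (max 0 y)) ?g"
      using sint_Iio[OF r um ub, of "max 0 y"] unfolding interval_lebesgue_integrable_def ei by simp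
    have m1: "min (-\<infinity>) (min (ereal 0) (ereal y)) = -\<infinity>" by (rule min_absorb1) simp
    have m2: "max (-\<infinity>) (max (ereal 0) (ereal y)) = ereal (max 0 y)" unfolding mx by (rule max_absorb2) simp
    have int: "interval_lebesgue_integrable lborel (min (-\<infinity>) (min (ereal 0) (ereal y))) (max (-\<infinity>) (max (ereal 0) (ereal y))) ?g"
      unfolding m1 m2 by (rule int0)
    have sum: "(LBINT z=-\<infinity>..ereal 0. ?g z) + (LBINT z=ereal 0..ereal y. ?g z) = (LBINT z=-\<infinity>..ereal y. ?g z)"
      by (rule interval_integral_sum[OF int])
    have cv: "(LBINT z=-\<infinity>..ereal c. ?g z) = (LINT z:{..<c}|lborel. ?g z)" for c
      by (subst interval_lebesgue_integral_le_eq) (simp_all add: ei)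
    have s2: "(LINT z:{..<0}|lborel. ?g z) + (LBINT z=ereal 0..ereal y. ?g z) = (LINT z:{..<y}|lborel. ?g z)"
      using sum unfolding cv .
    show ?thesis by (rule s2[symmetric])
  qed
  have gc: "continuous_on UNIV ?g" using uc by (intro continuous_intros)
  have feq: "(\<lambda>y. LINT z:{..<y}|lborel. ?g z) = (\<lambda>y. (LINT z:{..<0}|lborel. ?g z) + (LBINT z=ereal 0..ereal y. ?g z))"
    by (rule ext) (rule eq)
  have "((\<lambda>y. (LINT z:{..<0}|lborel. ?g z) + (LBINT z=ereal 0..ereal y. ?g z)) has_real_derivative 0 + ?g x) (at x)"
    by (intro derivative_intros ftc_at[OF gc])
  then show ?thesis by (subst feq) simp
qed

lemma Q_deriv:
  fixes r B x :: real and u :: "real \<Rightarrow> real"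
  assumes r: "r > 0" and uc: "continuous_on UNIV u" and ub: "\<And>z. \<bar>u z\<bar> \<le> B"
  shows "((\<lambda>y. LINT z:{y<..}|lborel. exp (- r * z) * u z) has_real_derivative - (exp (- r * x) * u x)) (at x)"
proof -
  have um: "u \<in> borel_measurable borel" using uc by (rule borel_measurable_continuous_onI)
  let ?g = "\<lambda>z. exp (- r * z) * u z"
  have eq: "(LINT z:{y<..}|lborel. ?g z) = (LINT z:{0<..}|lborel. ?g z) - (LBINT z=ereal 0..ereal y. ?g z)" for y
  proof -
    have ei: "einterval (ereal c) \<infinity> = {c<..}" for c by (auto simp: einterval_iff)
    have mn: "min (ereal 0) (ereal y) = ereal (min 0 y)" by (cases "0 \<le> y") (auto simp: min_def)
    have int0: "interval_lebesgue_integrable lborel (ereal (min 0 y)) \<infinity> ?g"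
      using sint_Ioi[OF r um ub, of "min 0 y"] unfolding interval_lebesgue_integrable_def ei by simp
    have m1: "min (ereal 0) (min (ereal y) \<infinity>) = ereal (min 0 y)" by (simp add: mn[symmetric])
    have m2: "max (ereal 0) (max (ereal y) \<infinity>) = \<infinity>" by simp
    have int: "interval_lebesgue_integrable lborel (min (ereal 0) (min (ereal y) \<infinity>)) (max (ereal 0) (max (ereal y) \<infinity>)) ?g"
      unfolding m1 m2 by (rule int0)
    have "(LBINT z=ereal 0..ereal y. ?g z) + (LBINT z=ereal y..\<infinity>. ?g z) = (LBINT z=ereal 0..\<infinity>. ?g z)"
      by (rule interval_integral_sum[OF int])
    then have "(LBINT z=ereal 0..ereal y. ?g z) + (LINT z:{y<..}|lborel. ?g z) = (LINT z:{0<..}|lborel. ?g z)"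
      unfolding interval_integral_to_infinity_eq .
    then show ?thesis by (rule real_sub_helper)
  qed
  have gc: "continuous_on UNIV ?g" using uc by (intro continuous_intros)
  have feq: "(\<lambda>y. LINT z:{y<..}|lborel. ?g z) = (\<lambda>y. (LINT z:{0<..}|lborel. ?g z) - (LBINT z=ereal 0..ereal y. ?g z))"
    by (rule ext) (rule eq)
  have "((\<lambda>y. (LINT z:{0<..}|lborel. ?g z) - (LBINT z=ereal 0..ereal y. ?g z)) has_real_derivative 0 - ?g x) (at x)"
    by (intro derivative_intros ftc_at[OF gc])
  then show ?thesis by (subst feq) simp
qed


lemma Vfun_deriv:
  fixes lm mi B x :: real and u :: "real \<Rightarrow> real"
  assumes lm: "lm > 0" and uc: "continuous_on UNIV u" and ub: "\<And>z. \<bar>u z\<bar> \<le> B"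
  shows "(Vfun lm mi u has_real_derivative
     mi / 2 * ((LINT z:{x<..}|lborel. exp (- sqrt lm * (z - x)) * u z) - (LINT z:{..<x}|lborel. exp (- sqrt lm * (x - z)) * u z))) (at x)"
proof -
  define r where "r = sqrt lm"
  have r: "r > 0" using lm by (simp add: r_def)
  have um: "u \<in> borel_measurable borel" using uc by (rule borel_measurable_continuous_onI)
  define P where "P = (\<lambda>y. LINT z:{..<y}|lborel. exp (r * z) * u z)"
  define Q where "Q = (\<lambda>y. LINT z:{y<..}|lborel. exp (- r * z) * u z)"
  have V: "Vfun lm mi u = (\<lambda>y. mi / (2 * r) * (exp (- r * y) * P y + exp (r * y) * Q y))"
  proof (rule ext)
    fix y
    have "Vfun lm mi u y = mi / (2 * r) * (\<integral>z. exp (- r * \<bar>y - z\<bar>) * u z \<partial>lborel)"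
      using Vfun_eq[OF lm uc ub, of mi y] unfolding r_def .
    then show "Vfun lm mi u y = mi / (2 * r) * (exp (- r * y) * P y + exp (r * y) * Q y)"
      unfolding E_split[OF r um ub, of y] P_def Q_def .
  qed
  have dP: "(P has_real_derivative exp (r * x) * u x) (at x)" unfolding P_def by (rule P_deriv[OF r uc ub])
  have dQ: "(Q has_real_derivative - (exp (- r * x) * u x)) (at x)" unfolding Q_def by (rule Q_deriv[OF r uc ub])
  have e1: "((\<lambda>y. exp (- r * y)) has_real_derivative exp (- r * x) * (- r)) (at x)"
    by (auto intro!: derivative_eq_intros)
  have e2: "((\<lambda>y. exp (r * y)) has_real_derivative exp (r * x) * r) (at x)"
    by (auto intro!: derivative_eq_intros)
  have d: "((\<lambda>y. mi / (2 * r) * (exp (- r * y) * P y + exp (r * y) * Q y)) has_real_derivative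
      mi / (2 * r) * ((exp (- r * x) * (- r)) * P x + (exp (r * x) * u x) * exp (- r * x)
         + ((exp (r * x) * r) * Q x + (- (exp (- r * x) * u x)) * exp (r * x)))) (at x)"
    by (intro DERIV_cmult DERIV_add DERIV_mult e1 e2 dP dQ)
  have val: "mi / (2 * r) * ((exp (- r * x) * (- r)) * P x + (exp (r * x) * u x) * exp (- r * x)
         + ((exp (r * x) * r) * Q x + (- (exp (- r * x) * u x)) * exp (r * x)))
     = mi / 2 * (exp (r * x) * Q x - exp (- r * x) * P x)"
    using r by (simp add: field_simps mult_exp_exp)
  have q: "exp (r * x) * Q x = (LINT z:{x<..}|lborel. exp (- r * (z - x)) * u z)"
  proof -
    have "exp (r * x) * Q x = (LINT z:{x<..}|lborel. exp (r * x) * (exp (- r * z) * u z))"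
      unfolding Q_def by simp
    also have "\<dots> = (LINT z:{x<..}|lborel. exp (- r * (z - x)) * u z)"
      by (rule set_lebesgue_integral_cong) (auto simp: mult_exp_exp algebra_simps)
    finally show ?thesis .
  qed
  have p: "exp (- r * x) * P x = (LINT z:{..<x}|lborel. exp (- r * (x - z)) * u z)"
  proof -
    have "exp (- r * x) * P x = (LINT z:{..<x}|lborel. exp (- r * x) * (exp (r * z) * u z))"
      unfolding P_def by simp
    also have "\<dots> = (LINT z:{..<x}|lborel. exp (- r * (x - z)) * u z)"
      by (rule set_lebesgue_integral_cong) (auto simp: mult_exp_exp algebra_simps)
    finally show ?thesis .
  qed
  have "(Vfun lm mi u has_real_derivative mi / 2 * ((LINT z:{x<..}|lborel. exp (- r * (z - x)) * u z) - (LINT z:{..<x}|lborel. exp (- r * (x - z)) * u z))) (at x)"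
    using d unfolding val q p V .
  then show ?thesis unfolding r_def .
qed


lemma gen_bound:
  fixes A :: "real set" and K1 K2 w u :: "real \<Rightarrow> real" and B :: real
  assumes A[measurable]: "A \<in> sets borel"
  and K1m[measurable]: "K1 \<in> borel_measurable borel" and K2m[measurable]: "K2 \<in> borel_measurable borel"
  and K1: "set_integrable lborel A K1" and K2: "set_integrable lborel A K2"
  and Kw1: "set_integrable lborel A (\<lambda>z. K1 z * w z)" and Kw2: "set_integrable lborel A (\<lambda>z. K2 z * w z)"
  and ord: "\<And>z. z \<in> A \<Longrightarrow> 0 \<le> K2 z \<and> K2 z \<le> K1 z"
  and um[measurable]: "u \<in> borel_measurable borel" and ub: "\<And>z. \<bar>u z\<bar> \<le> B"
  and uw: "\<And>z. 0 \<le> u z \<and> u z \<le> w z"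
  shows "0 \<le> (LINT z:A|lborel. K1 z * u z) - (LINT z:A|lborel. K2 z * u z)"
    "(LINT z:A|lborel. K1 z * u z) - (LINT z:A|lborel. K2 z * u z)
      \<le> (LINT z:A|lborel. K1 z * w z) - (LINT z:A|lborel. K2 z * w z)"
proof -
  have Ku: "set_integrable lborel A (\<lambda>z. K z * u z)"
    if K[measurable]: "K \<in> borel_measurable borel" and Ki: "set_integrable lborel A K"
      and Kp: "\<And>z. z \<in> A \<Longrightarrow> 0 \<le> K z" for K
  proof (rule set_integrable_bound[OF set_integrable_mult_left[OF Ki, of B]])
    show "set_borel_measurable lborel A (\<lambda>z. K z * u z)"
      unfolding set_borel_measurable_def by measurable
    show "AE x in lborel. x \<in> A \<longrightarrow> norm (K x * u x) \<le> norm (K x * B)"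
    proof (rule AE_I2, rule impI)
      fix x assume x: "x \<in> A"
      have "\<bar>u x\<bar> \<le> \<bar>B\<bar>" using ub[of x] by simp
      then show "norm (K x * u x) \<le> norm (K x * B)"
        using Kp[OF x] by (simp add: abs_mult mult_left_mono)
    qed
  qed
  have K1u: "set_integrable lborel A (\<lambda>z. K1 z * u z)"
    by (rule Ku[OF K1m K1]) (use ord in force)
  have K2u: "set_integrable lborel A (\<lambda>z. K2 z * u z)"
    by (rule Ku[OF K2m K2]) (use ord in force)
  have d1: "(LINT z:A|lborel. K1 z * u z) - (LINT z:A|lborel. K2 z * u z) = (LINT z:A|lborel. K1 z * u z - K2 z * u z)"
    using set_integral_diff(2)[OF K1u K2u] by simp
  have d2: "(LINT z:A|lborel. K1 z * w z) - (LINT z:A|lborel. K2 z * w z) = (LINT z:A|lborel. K1 z * w z - K2 z * w z)"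
    using set_integral_diff(2)[OF Kw1 Kw2] by simp
  have "(LINT z:A|lborel. (0::real)) \<le> (LINT z:A|lborel. K1 z * u z - K2 z * u z)"
    by (rule set_integral_mono) (use set_integral_diff(1)[OF K1u K2u] ord uw in \<open>auto simp: set_integrable_def simp flip: left_diff_distrib\<close>)
  then show "0 \<le> (LINT z:A|lborel. K1 z * u z) - (LINT z:A|lborel. K2 z * u z)"
    unfolding d1 by (simp add: set_lebesgue_integral_def)
  have "(LINT z:A|lborel. K1 z * u z - K2 z * u z) \<le> (LINT z:A|lborel. K1 z * w z - K2 z * w z)"
  proof (rule set_integral_mono)
    show "set_integrable lborel A (\<lambda>z. K1 z * u z - K2 z * u z)" by (rule set_integral_diff(1)[OF K1u K2u])
    show "set_integrable lborel A (\<lambda>z. K1 z * w z - K2 z * w z)" by (rule set_integral_diff(1)[OF Kw1 Kw2])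
    fix z assume z: "z \<in> A"
    have "(K1 z - K2 z) * u z \<le> (K1 z - K2 z) * w z"
      using ord[OF z] uw[of z] by (intro mult_left_mono) auto
    then show "K1 z * u z - K2 z * u z \<le> K1 z * w z - K2 z * w z" by (simp add: left_diff_distrib)
  qed
  then show "(LINT z:A|lborel. K1 z * u z) - (LINT z:A|lborel. K2 z * u z)
      \<le> (LINT z:A|lborel. K1 z * w z) - (LINT z:A|lborel. K2 z * w z)"
    unfolding d1 d2 .
qed

lemma int_left:
  fixes r k x :: real assumes r: "r > 0" and rk: "k < r"
  shows "set_integrable lborel {..<x} (\<lambda>z. exp (- r * (x - z)))"
    "(LINT z:{..<x}|lborel. exp (- r * (x - z))) = 1 / r"
    "set_integrable lborel {..<x} (\<lambda>z. exp (- r * (x - z)) * exp (- k * z))"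
    "(LINT z:{..<x}|lborel. exp (- r * (x - z)) * exp (- k * z)) = exp (- k * x) / (r - k)"
proof -
  have e1: "(\<lambda>z. exp (- r * (x - z))) = (\<lambda>z. exp (- r * x) * exp (r * z))"
    by (auto simp: fun_eq_iff mult_exp_exp algebra_simps)
  have e2: "(\<lambda>z. exp (- r * (x - z)) * exp (- k * z)) = (\<lambda>z. exp (- r * x) * exp ((r - k) * z))"
    by (auto simp: fun_eq_iff mult_exp_exp algebra_simps)
  have rk': "r - k > 0" using rk by simp
  show "set_integrable lborel {..<x} (\<lambda>z. exp (- r * (x - z)))"
    unfolding e1 using exp_Iio(1)[OF r, of x] by simp
  show "(LINT z:{..<x}|lborel. exp (- r * (x - z))) = 1 / r"
    unfolding e1 set_integral_mult_right exp_Iio(2)[OF r] using r by (simp add: mult_exp_exp)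
  show "set_integrable lborel {..<x} (\<lambda>z. exp (- r * (x - z)) * exp (- k * z))"
    unfolding e2 using exp_Iio(1)[OF rk', of x] by simp
  show "(LINT z:{..<x}|lborel. exp (- r * (x - z)) * exp (- k * z)) = exp (- k * x) / (r - k)"
    unfolding e2 set_integral_mult_right exp_Iio(2)[OF rk'] using rk' by (simp add: mult_exp_exp algebra_simps)
qed

lemma int_right:
  fixes r k x :: real assumes r: "r > 0" and rk: "0 < r + k"
  shows "set_integrable lborel {x<..} (\<lambda>z. exp (- r * (z - x)))"
    "(LINT z:{x<..}|lborel. exp (- r * (z - x))) = 1 / r"
    "set_integrable lborel {x<..} (\<lambda>z. exp (- r * (z - x)) * exp (- k * z))"
    "(LINT z:{x<..}|lborel. exp (- r * (z - x)) * exp (- k * z)) = exp (- k * x) / (r + k)"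
proof -
  have e1: "(\<lambda>z. exp (- r * (z - x))) = (\<lambda>z. exp (r * x) * exp (- r * z))"
    by (auto simp: fun_eq_iff mult_exp_exp algebra_simps)
  have e2: "(\<lambda>z. exp (- r * (z - x)) * exp (- k * z)) = (\<lambda>z. exp (r * x) * exp (- (r + k) * z))"
    by (auto simp: fun_eq_iff mult_exp_exp algebra_simps)
  show "set_integrable lborel {x<..} (\<lambda>z. exp (- r * (z - x)))"
    unfolding e1 using exp_Ioi(1)[OF r, of x] by simp
  show "(LINT z:{x<..}|lborel. exp (- r * (z - x))) = 1 / r"
    unfolding e1 set_integral_mult_right exp_Ioi(2)[OF r] using r by (simp add: mult_exp_exp)
  show "set_integrable lborel {x<..} (\<lambda>z. exp (- r * (z - x)) * exp (- k * z))"
    unfolding e2 using exp_Ioi(1)[OF rk, of x] by simp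
  show "(LINT z:{x<..}|lborel. exp (- r * (z - x)) * exp (- k * z)) = exp (- k * x) / (r + k)"
    unfolding e2 set_integral_mult_right exp_Ioi(2)[OF rk] using rk by (simp add: mult_exp_exp algebra_simps)
qed


definition Pint :: "real \<Rightarrow> (real \<Rightarrow> real) \<Rightarrow> real \<Rightarrow> real" where
  "Pint r u x = (LINT z:{..<x}|lborel. exp (- r * (x - z)) * u z)"
definition Qint :: "real \<Rightarrow> (real \<Rightarrow> real) \<Rightarrow> real \<Rightarrow> real" where
  "Qint r u x = (LINT z:{x<..}|lborel. exp (- r * (z - x)) * u z)"

lemma PQ_pair:
  fixes r1 r2 k x C0 B :: real and u :: "real \<Rightarrow> real"
  assumes k: "0 < k" and kr: "k < r1" and r12: "r1 \<le> r2"
    and um: "u \<in> borel_measurable borel" and ub: "\<And>z. \<bar>u z\<bar> \<le> B"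
    and u0: "\<And>z. 0 \<le> u z" and uC: "\<And>z. u z \<le> C0" and ue: "\<And>z. u z \<le> exp (- k * z)"
  shows "0 \<le> Pint r1 u x - Pint r2 u x"
    "Pint r1 u x - Pint r2 u x \<le> C0 * (1 / r1 - 1 / r2)"
    "Pint r1 u x - Pint r2 u x \<le> exp (- k * x) * (1 / (r1 - k) - 1 / (r2 - k))"
    "0 \<le> Qint r1 u x - Qint r2 u x"
    "Qint r1 u x - Qint r2 u x \<le> C0 * (1 / r1 - 1 / r2)"
    "Qint r1 u x - Qint r2 u x \<le> exp (- k * x) * (1 / (r1 + k) - 1 / (r2 + k))"
proof -
  have r1: "r1 > 0" and r2: "r2 > 0" and kr2: "k < r2" using k kr r12 by auto
  have ordL: "0 \<le> exp (- r2 * (x - z)) \<and> exp (- r2 * (x - z)) \<le> exp (- r1 * (x - z))" if "z \<in> {..<x}" for z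
    using that r12 by (auto intro!: mult_right_mono)
  have ordR: "0 \<le> exp (- r2 * (z - x)) \<and> exp (- r2 * (z - x)) \<le> exp (- r1 * (z - x))" if "z \<in> {x<..}" for z
    using that r12 by (auto intro!: mult_right_mono)
  note L1 = int_left[OF r1 kr, of x] and L2 = int_left[OF r2 kr2, of x]
  have k1: "0 < r1 + k" "0 < r2 + k" using k r1 r2 by auto
  note R1 = int_right[OF r1 k1(1), of x] and R2 = int_right[OF r2 k1(2), of x]
  note gL = gen_bound[of "{..<x}" "\<lambda>z. exp (- r1 * (x - z))" "\<lambda>z. exp (- r2 * (x - z))", OF _ _ _ L1(1) L2(1)]
  note gR = gen_bound[of "{x<..}" "\<lambda>z. exp (- r1 * (z - x))" "\<lambda>z. exp (- r2 * (z - x))", OF _ _ _ R1(1) R2(1)]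
  have gLC: "0 \<le> Pint r1 u x - Pint r2 u x \<and> Pint r1 u x - Pint r2 u x \<le> C0 / r1 - C0 / r2"
    using gL[of "\<lambda>_. C0" u B] L1(1) L2(1) ordL um ub u0 uC L1(2) L2(2) unfolding Pint_def
    by (simp add: set_integrable_mult_left)
  have gLe: "Pint r1 u x - Pint r2 u x \<le> exp (- k * x) / (r1 - k) - exp (- k * x) / (r2 - k)"
    using gL[of "\<lambda>z. exp (- k * z)" u B] L1(3) L2(3) ordL um ub u0 ue L1(4) L2(4) unfolding Pint_def
    by simp
  have gRC: "0 \<le> Qint r1 u x - Qint r2 u x \<and> Qint r1 u x - Qint r2 u x \<le> C0 / r1 - C0 / r2"
    using gR[of "\<lambda>_. C0" u B] R1(1) R2(1) ordR um ub u0 uC R1(2) R2(2) unfolding Qint_def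
    by (simp add: set_integrable_mult_left)
  have gRe: "Qint r1 u x - Qint r2 u x \<le> exp (- k * x) / (r1 + k) - exp (- k * x) / (r2 + k)"
    using gR[of "\<lambda>z. exp (- k * z)" u B] R1(3) R2(3) ordR um ub u0 ue R1(4) R2(4) unfolding Qint_def
    by simp
  show "0 \<le> Pint r1 u x - Pint r2 u x" using gLC by simp
  show "Pint r1 u x - Pint r2 u x \<le> C0 * (1 / r1 - 1 / r2)" using gLC by (simp add: right_diff_distrib)
  show "Pint r1 u x - Pint r2 u x \<le> exp (- k * x) * (1 / (r1 - k) - 1 / (r2 - k))" using gLe by (simp add: right_diff_distrib)
  show "0 \<le> Qint r1 u x - Qint r2 u x" using gRC by simp
  show "Qint r1 u x - Qint r2 u x \<le> C0 * (1 / r1 - 1 / r2)" using gRC by (simp add: right_diff_distrib)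
  show "Qint r1 u x - Qint r2 u x \<le> exp (- k * x) * (1 / (r1 + k) - 1 / (r2 + k))" using gRe by (simp add: right_diff_distrib)
qed

lemma alg_main:
  fixes ri rj k si sj :: real
  assumes k: "0 \<le> k" and kri: "k < ri" and rij: "ri \<le> rj" and si: "si > 0" and sj: "sj > 0"
    and si2: "si\<^sup>2 = ri\<^sup>2 - k\<^sup>2" and sj2: "sj\<^sup>2 = rj\<^sup>2 - k\<^sup>2"
  shows "(1/(ri+k) - 1/(rj+k) + (1/(ri-k) - 1/(rj-k))) / 2 \<le> (1/si - 1/sj) + k*(rj\<^sup>2 - ri\<^sup>2)/(si\<^sup>2 * sj\<^sup>2)"
proof -
  have krj: "k < rj" using kri rij by simp
  have lowi: "ri - k \<le> si"
  proof (rule power2_le_imp_le)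
    show "(ri - k)\<^sup>2 \<le> si\<^sup>2" unfolding si2 using k kri
      by (simp add: power2_eq_square algebra_simps) (simp add: mult_left_mono flip: distrib_left)
  qed (use si in simp)
  have lowj: "rj - k \<le> sj"
  proof (rule power2_le_imp_le)
    show "(rj - k)\<^sup>2 \<le> sj\<^sup>2" unfolding sj2 using k krj
      by (simp add: power2_eq_square algebra_simps) (simp add: mult_left_mono flip: distrib_left)
  qed (use sj in simp)
  have upi: "si \<le> ri"
    by (rule power2_le_imp_le) (use si2 kri k in \<open>auto\<close>)
  have upj: "sj \<le> rj"
    by (rule power2_le_imp_le) (use sj2 krj k in \<open>auto\<close>)
  have a1: "(ri - k) * (rj - k) * si \<le> ri * si * sj"
  proof -
    have "(ri - k) * (rj - k) * si \<le> (ri - k) * sj * si"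
      using lowj kri si by (intro mult_right_mono mult_left_mono) auto
    also have "\<dots> \<le> ri * sj * si" using k si sj by (intro mult_right_mono) auto
    finally show ?thesis by (simp add: algebra_simps)
  qed
  have a2: "(ri - k) * (rj - k) * sj \<le> rj * si * sj"
  proof -
    have "(ri - k) * (rj - k) * sj \<le> si * (rj - k) * sj"
      using lowi krj sj by (intro mult_right_mono) auto
    also have "\<dots> \<le> si * rj * sj" using k si sj by (intro mult_right_mono mult_left_mono) auto
    finally show ?thesis by (simp add: algebra_simps)
  qed
  have a3: "(ri - k) * (rj - k) * (si + sj) \<le> (ri + rj) * si * sj"
    using a1 a2 by (simp add: algebra_simps)
  have sq: "(rj - ri) * (ri + rj) = (sj - si) * (sj + si)"
    using si2 sj2 by (simp add: power2_eq_square algebra_simps)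
  have key: "(rj - ri) * (ri - k) * (rj - k) \<le> (sj - si) * si * sj"
  proof -
    have "(rj - ri) * ((ri - k) * (rj - k) * (si + sj)) \<le> (rj - ri) * ((ri + rj) * si * sj)"
      using a3 rij by (intro mult_left_mono) auto
    also have "\<dots> = ((rj - ri) * (ri + rj)) * (si * sj)" by (simp only: mult.assoc)
    also have "\<dots> = ((sj - si) * (sj + si)) * (si * sj)" by (simp only: sq)
    also have "\<dots> = (sj - si) * si * sj * (si + sj)" by (simp add: algebra_simps)
    finally have "(rj - ri) * (ri - k) * (rj - k) * (si + sj) \<le> (sj - si) * si * sj * (si + sj)"
      by (simp add: algebra_simps)
    then show ?thesis using si sj by (simp add: mult_le_cancel_right)
  qed
  define D where "D = si\<^sup>2 * sj\<^sup>2"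
  have Dpos: "D > 0" unfolding D_def using si sj by simp
  have D2: "D = (ri + k) * (ri - k) * ((rj + k) * (rj - k))" unfolding D_def si2 sj2
    by (simp add: power2_eq_square algebra_simps)
  have lhs: "(1/(ri+k) - 1/(rj+k) + (1/(ri-k) - 1/(rj-k))) / 2 = (rj - ri) * (ri * rj + k\<^sup>2) / D"
  proof -
    have p1: "ri + k > 0" "rj + k > 0" "ri - k > 0" "rj - k > 0" using k kri krj by auto
    have f1: "1/(ri+k) - 1/(rj+k) = (rj - ri) / ((ri+k)*(rj+k))" using p1 by (simp add: field_simps)
    have f2: "1/(ri-k) - 1/(rj-k) = (rj - ri) / ((ri-k)*(rj-k))" using p1 by (simp add: field_simps)
    have f3: "(rj - ri) / ((ri+k)*(rj+k)) + (rj - ri) / ((ri-k)*(rj-k))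
       = ((rj - ri) * ((ri-k)*(rj-k)) + (rj - ri) * ((ri+k)*(rj+k))) / (((ri+k)*(rj+k)) * ((ri-k)*(rj-k)))"
      by (rule add_frac_eq) (use p1 in auto)
    have f4: "(rj - ri) * ((ri-k)*(rj-k)) + (rj - ri) * ((ri+k)*(rj+k)) = 2 * ((rj - ri) * (ri * rj + k\<^sup>2))"
      by (simp add: power2_eq_square algebra_simps)
    have f5: "((ri+k)*(rj+k)) * ((ri-k)*(rj-k)) = (ri + k) * (ri - k) * ((rj + k) * (rj - k))"
      by (simp add: algebra_simps)
    show ?thesis unfolding f1 f2 f3 f4 f5 D2 by simp
  qed
  have rhs: "(1/si - 1/sj) + k*(rj\<^sup>2 - ri\<^sup>2)/(si\<^sup>2 * sj\<^sup>2) = ((sj - si) * si * sj + k*(rj\<^sup>2 - ri\<^sup>2)) / D"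
    unfolding D_def using si sj by (simp add: field_simps power2_eq_square)
  have "(rj - ri) * (ri * rj + k\<^sup>2) \<le> (sj - si) * si * sj + k*(rj\<^sup>2 - ri\<^sup>2)"
    using key by (simp add: power2_eq_square algebra_simps)
  then show ?thesis unfolding lhs rhs using Dpos by (simp add: divide_right_mono)
qed

lemma PQ_single:
  fixes r k x C0 B :: real and u :: "real \<Rightarrow> real"
  assumes k: "0 < k" and kr: "k < r"
    and um: "u \<in> borel_measurable borel" and ub: "\<And>z. \<bar>u z\<bar> \<le> B"
    and u0: "\<And>z. 0 \<le> u z" and uC: "\<And>z. u z \<le> C0" and ue: "\<And>z. u z \<le> exp (- k * z)"
  shows "0 \<le> Pint r u x" "Pint r u x \<le> C0 / r" "Pint r u x \<le> exp (- k * x) / (r - k)"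
    "0 \<le> Qint r u x" "Qint r u x \<le> C0 / r" "Qint r u x \<le> exp (- k * x) / (r + k)"
proof -
  have r: "r > 0" using k kr by auto
  have ordL: "0 \<le> (0::real) \<and> 0 \<le> exp (- r * (x - z))" for z by simp
  have ordR: "0 \<le> (0::real) \<and> 0 \<le> exp (- r * (z - x))" for z by simp
  note L1 = int_left[OF r kr, of x]
  have k1: "0 < r + k" using k r by auto
  note R1 = int_right[OF r k1, of x]
  have z: "set_integrable lborel A (\<lambda>z. (0::real))" for A by (simp add: set_integrable_def)
  have zz: "set_integrable lborel A (\<lambda>z. (0::real) * C0)" for A by (simp add: set_integrable_def)
  have zz2: "set_integrable lborel A (\<lambda>z. (0::real) * exp (- k * z))" for A by (simp add: set_integrable_def)
  note gL = gen_bound[of "{..<x}" "\<lambda>z. exp (- r * (x - z))" "\<lambda>z. 0", OF _ _ _ L1(1) z]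
  note gR = gen_bound[of "{x<..}" "\<lambda>z. exp (- r * (z - x))" "\<lambda>z. 0", OF _ _ _ R1(1) z]
  have gLC: "0 \<le> Pint r u x \<and> Pint r u x \<le> C0 / r"
    using gL[of "\<lambda>_. C0" u B, OF _ _ _ _ zz] L1(1) ordL um ub u0 uC L1(2) z unfolding Pint_def
    by (simp add: set_integrable_mult_left set_lebesgue_integral_def)
  have gLe: "Pint r u x \<le> exp (- k * x) / (r - k)"
    using gL[of "\<lambda>z. exp (- k * z)" u B, OF _ _ _ _ zz2] L1(3) ordL um ub u0 ue L1(4) z unfolding Pint_def
    by (simp add: set_lebesgue_integral_def)
  have gRC: "0 \<le> Qint r u x \<and> Qint r u x \<le> C0 / r"
    using gR[of "\<lambda>_. C0" u B, OF _ _ _ _ zz] R1(1) ordR um ub u0 uC R1(2) z unfolding Qint_def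
    by (simp add: set_integrable_mult_left set_lebesgue_integral_def)
  have gRe: "Qint r u x \<le> exp (- k * x) / (r + k)"
    using gR[of "\<lambda>z. exp (- k * z)" u B, OF _ _ _ _ zz2] R1(3) ordR um ub u0 ue R1(4) z unfolding Qint_def
    by (simp add: set_lebesgue_integral_def)
  show "0 \<le> Pint r u x" "Pint r u x \<le> C0 / r" "Pint r u x \<le> exp (- k * x) / (r - k)"
    "0 \<le> Qint r u x" "Qint r u x \<le> C0 / r" "Qint r u x \<le> exp (- k * x) / (r + k)"
    using gLC gLe gRC gRe by auto
qed


lemma half_le1: "(a::real) \<le> q + p \<Longrightarrow> p \<le> c \<Longrightarrow> q \<le> c \<Longrightarrow> a / 2 \<le> c" by linarith
lemma half_le2: "(p::real) \<le> c \<Longrightarrow> q \<le> c \<Longrightarrow> (q + p) / 2 \<le> c" by simp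
lemma half_le3: "(q::real) \<le> A \<Longrightarrow> p \<le> B \<Longrightarrow> (q + p) / 2 \<le> (A + B) / 2" by simp

lemma T1_bound:
  fixes l k x C0 B :: real and u :: "real \<Rightarrow> real"
  assumes k: "0 < k" and kl: "k\<^sup>2 < l"
    and um: "u \<in> borel_measurable borel" and ub: "\<And>z. \<bar>u z\<bar> \<le> B"
    and u0: "\<And>z. 0 \<le> u z" and uC: "\<And>z. u z \<le> C0" and ue: "\<And>z. u z \<le> exp (- k * z)"
  shows "\<bar>Qint (sqrt l) u x - Pint (sqrt l) u x\<bar> / 2
     \<le> min (C0 / sqrt l) ((1 / sqrt (l - k\<^sup>2) + k / (l - k\<^sup>2)) * exp (- k * x))"
proof -
  define r where "r = sqrt l"
  define s where "s = sqrt (l - k\<^sup>2)"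
  have kr: "k < r" unfolding r_def using kl k by (simp add: real_less_rsqrt)
  have r: "r > 0" using k kr by simp
  have s: "s > 0" unfolding s_def using kl by simp
  have s2: "s\<^sup>2 = l - k\<^sup>2" unfolding s_def using kl by simp
  have l0: "l > 0" using kl by (smt (verit) zero_le_power2)
  have r2: "r\<^sup>2 = l" unfolding r_def using l0 by simp
  note b = PQ_single[OF k kr um ub u0 uC ue, of x]
  have absb: "\<bar>Qint r u x - Pint r u x\<bar> \<le> Qint r u x + Pint r u x" using b(1) b(4) by simp
  have c1: "\<bar>Qint r u x - Pint r u x\<bar> / 2 \<le> C0 / r" using absb b(2) b(5) by (rule half_le1)
  have rsk: "r \<le> s + k"
  proof (rule power2_le_imp_le)
    show "r\<^sup>2 \<le> (s + k)\<^sup>2" unfolding r2 power2_sum using s2 s k by simp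
  qed (use s k in simp)
  have lk: "l - k\<^sup>2 > 0" using kl by simp
  have e0: "(1 / (r + k) + 1 / (r - k)) / 2 = r / (l - k\<^sup>2)"
  proof -
    have p: "r + k > 0" "r - k > 0" using r kr k by auto
    have "1 / (r + k) + 1 / (r - k) = (1 * (r - k) + 1 * (r + k)) / ((r + k) * (r - k))"
      by (rule add_frac_eq) (use p in auto)
    then have "(1 / (r + k) + 1 / (r - k)) / 2 = r / ((r + k) * (r - k))"
      by simp
    also have "(r + k) * (r - k) = l - k\<^sup>2" using r2 by (simp add: power2_eq_square algebra_simps)
    finally show ?thesis .
  qed
  have e1: "r / (l - k\<^sup>2) \<le> 1 / s + k / (l - k\<^sup>2)"
  proof -
    have "r / (l - k\<^sup>2) \<le> (s + k) / (l - k\<^sup>2)" using rsk lk by (simp add: divide_right_mono)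
    also have "\<dots> = 1 / s + k / (l - k\<^sup>2)" using s s2[symmetric] by (simp add: field_simps power2_eq_square)
    finally show ?thesis .
  qed
  have c2: "\<bar>Qint r u x - Pint r u x\<bar> / 2 \<le> (1 / s + k / (l - k\<^sup>2)) * exp (- k * x)"
  proof -
    have "\<bar>Qint r u x - Pint r u x\<bar> / 2 \<le> (exp (- k * x) / (r + k) + exp (- k * x) / (r - k)) / 2"
      using absb b(3) b(6) by simp
    also have "\<dots> = ((1 / (r + k) + 1 / (r - k)) / 2) * exp (- k * x)" by (simp add: field_simps)
    also have "\<dots> \<le> (1 / s + k / (l - k\<^sup>2)) * exp (- k * x)"
      unfolding e0 using e1 by (intro mult_right_mono) auto
    finally show ?thesis .
  qed
  show ?thesis using c1 c2 unfolding r_def s_def by simp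
qed

lemma T2_bound:
  fixes l1 l2 k x C0 B :: real and u :: "real \<Rightarrow> real"
  assumes k: "0 < k" and kl: "k\<^sup>2 < l1" and l12: "l1 \<le> l2"
    and um: "u \<in> borel_measurable borel" and ub: "\<And>z. \<bar>u z\<bar> \<le> B"
    and u0: "\<And>z. 0 \<le> u z" and uC: "\<And>z. u z \<le> C0" and ue: "\<And>z. u z \<le> exp (- k * z)"
  shows "(\<bar>Qint (sqrt l1) u x - Qint (sqrt l2) u x\<bar> + \<bar>Pint (sqrt l1) u x - Pint (sqrt l2) u x\<bar>) / 2
     \<le> min (C0 * \<bar>sqrt l1 - sqrt l2\<bar> / (sqrt l1 * sqrt l2))
           ((\<bar>1 / sqrt (l1 - k\<^sup>2) - 1 / sqrt (l2 - k\<^sup>2)\<bar> + k * \<bar>l1 - l2\<bar> / ((l1 - k\<^sup>2) * (l2 - k\<^sup>2))) * exp (- k * x))"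
proof -
  define r1 where "r1 = sqrt l1"
  define r2 where "r2 = sqrt l2"
  define s1 where "s1 = sqrt (l1 - k\<^sup>2)"
  define s2 where "s2 = sqrt (l2 - k\<^sup>2)"
  have kl2: "k\<^sup>2 < l2" using kl l12 by simp
  have kr1: "k < r1" unfolding r1_def using kl k by (simp add: real_less_rsqrt)
  have r12: "r1 \<le> r2" unfolding r1_def r2_def using l12 by simp
  have r1: "r1 > 0" and r2: "r2 > 0" using k kr1 r12 by auto
  have s1: "s1 > 0" unfolding s1_def using kl by simp
  have s2: "s2 > 0" unfolding s2_def using kl2 by simp
  have l10: "l1 > 0" using kl by (smt (verit) zero_le_power2)
  have l20: "l2 > 0" using kl2 by (smt (verit) zero_le_power2)
  have s1q: "s1\<^sup>2 = r1\<^sup>2 - k\<^sup>2" unfolding s1_def r1_def using kl l10 by simp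
  have s2q: "s2\<^sup>2 = r2\<^sup>2 - k\<^sup>2" unfolding s2_def r2_def using kl2 l20 by simp
  have r1q: "r1\<^sup>2 = l1" unfolding r1_def using l10 by simp
  have r2q: "r2\<^sup>2 = l2" unfolding r2_def using l20 by simp
  have s12: "s1 \<le> s2" unfolding s1_def s2_def using l12 by simp
  note b = PQ_pair[OF k kr1 r12 um ub u0 uC ue, of x]
  have ab1: "\<bar>Qint r1 u x - Qint r2 u x\<bar> = Qint r1 u x - Qint r2 u x" using b(4) by simp
  have ab2: "\<bar>Pint r1 u x - Pint r2 u x\<bar> = Pint r1 u x - Pint r2 u x" using b(1) by simp
  have c1: "(\<bar>Qint r1 u x - Qint r2 u x\<bar> + \<bar>Pint r1 u x - Pint r2 u x\<bar>) / 2 \<le> C0 * \<bar>r1 - r2\<bar> / (r1 * r2)"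
  proof -
    have "(\<bar>Qint r1 u x - Qint r2 u x\<bar> + \<bar>Pint r1 u x - Pint r2 u x\<bar>) / 2 \<le> C0 * (1 / r1 - 1 / r2)"
      unfolding ab1 ab2 using b(2) b(5) by (rule half_le2)
    also have "\<dots> = C0 * \<bar>r1 - r2\<bar> / (r1 * r2)" using r1 r2 r12 by (simp add: field_simps)
    finally show ?thesis .
  qed
  have alg: "(1/(r1+k) - 1/(r2+k) + (1/(r1-k) - 1/(r2-k))) / 2 \<le> (1/s1 - 1/s2) + k*(r2\<^sup>2 - r1\<^sup>2)/(s1\<^sup>2 * s2\<^sup>2)"
    by (rule alg_main) (use k kr1 r12 s1 s2 s1q s2q in auto)
  have rhs: "(1/s1 - 1/s2) + k*(r2\<^sup>2 - r1\<^sup>2)/(s1\<^sup>2 * s2\<^sup>2)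
     = \<bar>1 / s1 - 1 / s2\<bar> + k * \<bar>l1 - l2\<bar> / ((l1 - k\<^sup>2) * (l2 - k\<^sup>2))"
  proof -
    have "1 / s2 \<le> 1 / s1" using s1 s12 by (simp add: frac_le)
    moreover have "s1\<^sup>2 = l1 - k\<^sup>2" "s2\<^sup>2 = l2 - k\<^sup>2" using s1q s2q r1q r2q by auto
    ultimately show ?thesis using l12 r1q r2q by (simp add: abs_if)
  qed
  have c2: "(\<bar>Qint r1 u x - Qint r2 u x\<bar> + \<bar>Pint r1 u x - Pint r2 u x\<bar>) / 2
     \<le> (\<bar>1 / s1 - 1 / s2\<bar> + k * \<bar>l1 - l2\<bar> / ((l1 - k\<^sup>2) * (l2 - k\<^sup>2))) * exp (- k * x)"
  proof -
    have "(\<bar>Qint r1 u x - Qint r2 u x\<bar> + \<bar>Pint r1 u x - Pint r2 u x\<bar>) / 2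
        \<le> (exp (- k * x) * (1 / (r1 + k) - 1 / (r2 + k)) + exp (- k * x) * (1 / (r1 - k) - 1 / (r2 - k))) / 2"
      unfolding ab1 ab2 using b(6) b(3) by (rule half_le3)
    also have "\<dots> = ((1/(r1+k) - 1/(r2+k) + (1/(r1-k) - 1/(r2-k))) / 2) * exp (- k * x)"
      by (simp add: algebra_simps)
    also have "\<dots> \<le> (\<bar>1 / s1 - 1 / s2\<bar> + k * \<bar>l1 - l2\<bar> / ((l1 - k\<^sup>2) * (l2 - k\<^sup>2))) * exp (- k * x)"
      using alg unfolding rhs by (intro mult_right_mono) auto
    finally show ?thesis .
  qed
  show ?thesis using c1 c2 unfolding r1_def r2_def s1_def s2_def by simp
qed


lemma comb_bound:
  fixes A c Qi Pi Qj Pj X Y :: real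
  assumes c: "c \<ge> 0" and X: "\<bar>Qi - Pi\<bar> / 2 \<le> X" and Y: "(\<bar>Qi - Qj\<bar> + \<bar>Pi - Pj\<bar>) / 2 \<le> Y"
  shows "\<bar>A * ((Qi - Pi) / 2) + c * (((Qi - Qj) - (Pi - Pj)) / 2)\<bar> \<le> \<bar>A\<bar> * X + c * Y"
proof -
  have "\<bar>A * ((Qi - Pi) / 2) + c * (((Qi - Qj) - (Pi - Pj)) / 2)\<bar>
      \<le> \<bar>A * ((Qi - Pi) / 2)\<bar> + \<bar>c * (((Qi - Qj) - (Pi - Pj)) / 2)\<bar>" by (rule abs_triangle_ineq)
  also have "\<bar>A * ((Qi - Pi) / 2)\<bar> = \<bar>A\<bar> * (\<bar>Qi - Pi\<bar> / 2)" by (simp add: abs_mult)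
  also have "\<bar>c * (((Qi - Qj) - (Pi - Pj)) / 2)\<bar> = c * (\<bar>(Qi - Qj) - (Pi - Pj)\<bar> / 2)" using c by (simp add: abs_mult)
  also have "\<bar>A\<bar> * (\<bar>Qi - Pi\<bar> / 2) + c * (\<bar>(Qi - Qj) - (Pi - Pj)\<bar> / 2) \<le> \<bar>A\<bar> * X + c * Y"
  proof (rule add_mono)
    show "\<bar>A\<bar> * (\<bar>Qi - Pi\<bar> / 2) \<le> \<bar>A\<bar> * X" by (rule mult_left_mono[OF X abs_ge_zero])
    have "\<bar>(Qi - Qj) - (Pi - Pj)\<bar> / 2 \<le> (\<bar>Qi - Qj\<bar> + \<bar>Pi - Pj\<bar>) / 2"
      using abs_triangle_ineq4[of "Qi - Qj" "Pi - Pj"] by simp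
    then have "\<bar>(Qi - Qj) - (Pi - Pj)\<bar> / 2 \<le> Y" using Y by (rule order.trans)
    then show "c * (\<bar>(Qi - Qj) - (Pi - Pj)\<bar> / 2) \<le> c * Y" by (rule mult_left_mono[OF _ c])
  qed
  finally show ?thesis .
qed

lemma main_bound:
  fixes li lj mi mj ci cj a m C0 x B :: real and u :: "real \<Rightarrow> real"
  assumes li: "li > 0" and lj: "lj > 0" and ci: "ci \<ge> 0" and cj: "cj \<ge> 0" and mj: "mj > 0"
    and a: "a > 0" and m: "m > 0" and ami: "a * m\<^sup>2 < li" and amj: "a * m\<^sup>2 < lj"
    and uc: "continuous_on UNIV u" and ub: "\<And>z. \<bar>u z\<bar> \<le> B"
    and u0: "\<And>z. 0 \<le> u z" and uC: "\<And>z. u z \<le> C0" and ue: "\<And>z. u z \<le> phi a m z"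
  shows "\<bar>deriv (\<lambda>y. ci * Vfun li mi u y - cj * Vfun lj mj u y) x\<bar>
    \<le> \<bar>ci * mi - cj * mj\<bar> *
        min (C0 / sqrt li)
            ((1 / sqrt (li - a * m\<^sup>2) + m * sqrt a / (li - a * m\<^sup>2)) * phi a m x)
      + cj * mj *
        min (C0 * \<bar>sqrt li - sqrt lj\<bar> / sqrt (li * lj))
            ((\<bar>1 / sqrt (li - a * m\<^sup>2) - 1 / sqrt (lj - a * m\<^sup>2)\<bar>
              + m * sqrt a * \<bar>li - lj\<bar> / ((li - a * m\<^sup>2) * (lj - a * m\<^sup>2))) * phi a m x)"
proof -
  define k where "k = sqrt a * m"
  have k: "k > 0" unfolding k_def using a m by simp
  have k2: "k\<^sup>2 = a * m\<^sup>2" unfolding k_def using a by (simp add: power_mult_distrib)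
  have msa: "m * sqrt a = k" unfolding k_def by simp
  have ph: "phi a m z = exp (- k * z)" for z unfolding phi_def k_def by simp
  have ue': "u z \<le> exp (- k * z)" for z using ue[of z] unfolding ph .
  have um: "u \<in> borel_measurable borel" using uc by (rule borel_measurable_continuous_onI)
  have kli: "k\<^sup>2 < li" and klj: "k\<^sup>2 < lj" using ami amj k2 by auto
  define Pi where "Pi = Pint (sqrt li) u x"
  define Qi where "Qi = Qint (sqrt li) u x"
  define Pj where "Pj = Pint (sqrt lj) u x"
  define Qj where "Qj = Qint (sqrt lj) u x"
  have di: "(Vfun li mi u has_real_derivative mi / 2 * (Qi - Pi)) (at x)"
    using Vfun_deriv[OF li uc ub, of mi x] unfolding Qi_def Pi_def Qint_def Pint_def .
  have dj: "(Vfun lj mj u has_real_derivative mj / 2 * (Qj - Pj)) (at x)"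
    using Vfun_deriv[OF lj uc ub, of mj x] unfolding Qj_def Pj_def Qint_def Pint_def .
  have "((\<lambda>y. ci * Vfun li mi u y - cj * Vfun lj mj u y) has_real_derivative
      ci * (mi / 2 * (Qi - Pi)) - cj * (mj / 2 * (Qj - Pj))) (at x)"
    by (intro DERIV_diff DERIV_cmult di dj)
  then have dv: "deriv (\<lambda>y. ci * Vfun li mi u y - cj * Vfun lj mj u y) x = ci * (mi / 2 * (Qi - Pi)) - cj * (mj / 2 * (Qj - Pj))"
    by (rule DERIV_imp_deriv)
  have dv2: "ci * (mi / 2 * (Qi - Pi)) - cj * (mj / 2 * (Qj - Pj))
      = (ci * mi - cj * mj) * ((Qi - Pi) / 2) + (cj * mj) * (((Qi - Qj) - (Pi - Pj)) / 2)"
    by (simp add: field_simps)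
  have X: "\<bar>Qi - Pi\<bar> / 2 \<le> min (C0 / sqrt li) ((1 / sqrt (li - a * m\<^sup>2) + m * sqrt a / (li - a * m\<^sup>2)) * phi a m x)"
    using T1_bound[OF k kli um ub u0 uC ue', of x] unfolding Qi_def Pi_def k2 msa ph .
  have Y: "(\<bar>Qi - Qj\<bar> + \<bar>Pi - Pj\<bar>) / 2 \<le> min (C0 * \<bar>sqrt li - sqrt lj\<bar> / sqrt (li * lj))
            ((\<bar>1 / sqrt (li - a * m\<^sup>2) - 1 / sqrt (lj - a * m\<^sup>2)\<bar>
              + m * sqrt a * \<bar>li - lj\<bar> / ((li - a * m\<^sup>2) * (lj - a * m\<^sup>2))) * phi a m x)"
  proof (cases "li \<le> lj")
    case True
    show ?thesis
      using T2_bound[OF k kli True um ub u0 uC ue', of x]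
      unfolding Qi_def Pi_def Qj_def Pj_def k2 msa ph real_sqrt_mult by (simp add: mult.assoc)
  next
    case False
    then have le: "lj \<le> li" by simp
    have e1: "\<bar>sqrt lj - sqrt li\<bar> = \<bar>sqrt li - sqrt lj\<bar>" "\<bar>lj - li\<bar> = \<bar>li - lj\<bar>"
      "\<bar>1 / sqrt (lj - k\<^sup>2) - 1 / sqrt (li - k\<^sup>2)\<bar> = \<bar>1 / sqrt (li - k\<^sup>2) - 1 / sqrt (lj - k\<^sup>2)\<bar>"
      "\<bar>Qj - Qi\<bar> = \<bar>Qi - Qj\<bar>" "\<bar>Pj - Pi\<bar> = \<bar>Pi - Pj\<bar>"
      by (simp_all add: abs_minus_commute)
    have e2: "sqrt lj * sqrt li = sqrt li * sqrt lj" "(lj - k\<^sup>2) * (li - k\<^sup>2) = (li - k\<^sup>2) * (lj - k\<^sup>2)"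
      by (simp_all add: mult.commute)
    show ?thesis
      using T2_bound[OF k klj le um ub u0 uC ue', of x]
      unfolding Qi_def[symmetric] Pi_def[symmetric] Qj_def[symmetric] Pj_def[symmetric] e1 e2 add.commute[of "\<bar>Qi - Qj\<bar>"]
      unfolding k2 msa ph real_sqrt_mult by (simp add: mult.assoc add.commute)
  qed
  show ?thesis unfolding dv dv2 by (rule comb_bound[OF _ X Y]) (use cj mj in simp)
qed


theorem lemma2p4:
  fixes a b d m mt :: real and chi lam mu :: "nat \<Rightarrow> real"
  assumes "a > 0" and "b > 0"
    and "chi 1 \<ge> 0" and "chi 2 \<ge> 0"
    and "lam 1 > 0" and "lam 2 > 0" and "mu 1 > 0" and "mu 2 > 0"
    and "b + chi 2 * mu 2 > chi 1 * mu 1 + Mconst chi lam mu"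
    and "0 < m" and "m < min 1 (min (sqrt (lam 1 / a)) (sqrt (lam 2 / a)))"
    and "m < mt" and "mt < min (min 1 (2 * m)) (min (sqrt (lam 1 / a)) (sqrt (lam 2 / a)))"
    and "d > 1"
  shows "\<forall>i\<in>{1,2}. \<forall>j\<in>{1,2}. \<forall>x. \<forall>u\<in>Eset a b chi lam mu d m mt.
    \<bar>deriv (\<lambda>y. chi i * Vfun (lam i) (mu i) u y - chi j * Vfun (lam j) (mu j) u y) x\<bar>
    \<le> \<bar>chi i * mu i - chi j * mu j\<bar> *
        min (C0 a b chi lam mu / sqrt (lam i))
            ((1 / sqrt (lam i - a * m\<^sup>2) + m * sqrt a / (lam i - a * m\<^sup>2)) * phi a m x)
      + chi j * mu j *
        min (C0 a b chi lam mu * \<bar>sqrt (lam i) - sqrt (lam j)\<bar> / sqrt (lam i * lam j))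
            ((\<bar>1 / sqrt (lam i - a * m\<^sup>2) - 1 / sqrt (lam j - a * m\<^sup>2)\<bar>
              + m * sqrt a * \<bar>lam i - lam j\<bar> / ((lam i - a * m\<^sup>2) * (lam j - a * m\<^sup>2))) * phi a m x)"
  proof (intro ballI allI)
  fix i j :: nat and x :: real and u :: "real \<Rightarrow> real"
  assume i: "i \<in> {1, 2}" and j: "j \<in> {1, 2}" and uE: "u \<in> Eset a b chi lam mu d m mt"
  have a: "a > 0" and m: "m > 0" using assms by auto
  have lampos: "lam n > 0" and chinn: "chi n \<ge> 0" and mupos: "mu n > 0" and msmall: "m < sqrt (lam n / a)"
    if "n \<in> {1, 2}" for n
    using that assms by auto
  have am: "a * m\<^sup>2 < lam n" if n: "n \<in> {1, 2}" for n
  proof -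
    have "m\<^sup>2 < (sqrt (lam n / a))\<^sup>2" using msmall[OF n] m by (intro power_strict_mono) auto
    also have "\<dots> = lam n / a" using lampos[OF n] a by simp
    finally show ?thesis using a by (simp add: field_simps)
  qed
  have uC: "u \<in> Cb_unif" and ubd: "\<And>z. Uminus a d m mt z \<le> u z \<and> u z \<le> Uplus a b chi lam mu m z"
    using uE unfolding Eset_def by auto
  obtain B where B: "\<And>z. \<bar>u z\<bar> \<le> B"
    using uC unfolding Cb_unif_def bounded_iff by auto
  have uc: "continuous_on UNIV u"
    using uC unfolding Cb_unif_def by (auto intro: uniformly_continuous_imp_continuous)
  have u0: "0 \<le> u z" for z using ubd[of z] unfolding Uminus_def by simp
  have uCC: "u z \<le> C0 a b chi lam mu" for z using ubd[of z] unfolding Uplus_def by simp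
  have ue: "u z \<le> phi a m z" for z using ubd[of z] unfolding Uplus_def by simp
  show "\<bar>deriv (\<lambda>y. chi i * Vfun (lam i) (mu i) u y - chi j * Vfun (lam j) (mu j) u y) x\<bar>
    \<le> \<bar>chi i * mu i - chi j * mu j\<bar> *
        min (C0 a b chi lam mu / sqrt (lam i))
            ((1 / sqrt (lam i - a * m\<^sup>2) + m * sqrt a / (lam i - a * m\<^sup>2)) * phi a m x)
      + chi j * mu j *
        min (C0 a b chi lam mu * \<bar>sqrt (lam i) - sqrt (lam j)\<bar> / sqrt (lam i * lam j))
            ((\<bar>1 / sqrt (lam i - a * m\<^sup>2) - 1 / sqrt (lam j - a * m\<^sup>2)\<bar>
              + m * sqrt a * \<bar>lam i - lam j\<bar> / ((lam i - a * m\<^sup>2) * (lam j - a * m\<^sup>2))) * phi a m x)"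
    by (rule main_bound[OF lampos[OF i] lampos[OF j] chinn[OF i] chinn[OF j] mupos[OF j] a m am[OF i] am[OF j] uc B u0 uCC ue])
qed

end
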